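(* Let $(X_t)$ be an irreducible continuous-time Markov chain on a finite state space $S$ with stationary distribution $\pi$. For $s\ge0$ and $x\in S$ let $W_x$ be the Lebesgue measure of $\{0<t<s:X_t=x\}$. Then there is a constant $c$, independent of $s$, such that for every event $A\in\sigma(W_x:x\in S)$ and every $y\in S$, $$\mathbf P_y(A)\le c\max_{z\in S}\tilde{\mathbf P}_z(A),$$ where $\tilde{\mathbf P}_z$ denotes probability for the time-reversed chain started at $z$. *)

theory Defs
  imports "HOL-Probability.Probability"
begin

definition generator :: "('s::finite \<Rightarrow> 's \<Rightarrow> real) \<Rightarrow> bool" where
  "generator Q \<longleftrightarrow> (\<forall>x y. x \<noteq> y \<longrightarrow> Q x y \<ge> 0) \<and> (\<forall>x. (\<Sum>y\<in>UNIV. Q x y) = 0)"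

definition irreducible_gen :: "('s::finite \<Rightarrow> 's \<Rightarrow> real) \<Rightarrow> bool" where
  "irreducible_gen Q \<longleftrightarrow> (\<forall>x y. (x, y) \<in> {(a, b). a \<noteq> b \<and> Q a b > 0}\<^sup>*)"

definition stationary :: "('s::finite \<Rightarrow> 's \<Rightarrow> real) \<Rightarrow> ('s \<Rightarrow> real) \<Rightarrow> bool" where
  "stationary Q \<pi> \<longleftrightarrow> (\<forall>x. \<pi> x \<ge> 0) \<and> (\<Sum>x\<in>UNIV. \<pi> x) = 1 \<and> (\<forall>y. (\<Sum>x\<in>UNIV. \<pi> x * Q x y) = 0)"

definition reversed_gen :: "('s::finite \<Rightarrow> 's \<Rightarrow> real) \<Rightarrow> ('s \<Rightarrow> real) \<Rightarrow> 's \<Rightarrow> 's \<Rightarrow> real" where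
  "reversed_gen Q \<pi> x y = \<pi> y * Q y x / \<pi> x"

fun mpow :: "('s::finite \<Rightarrow> 's \<Rightarrow> real) \<Rightarrow> nat \<Rightarrow> 's \<Rightarrow> 's \<Rightarrow> real" where
  "mpow Q 0 x y = (if x = y then 1 else 0)"
| "mpow Q (Suc k) x y = (\<Sum>z\<in>UNIV. mpow Q k x z * Q z y)"

definition trans_fun :: "('s::finite \<Rightarrow> 's \<Rightarrow> real) \<Rightarrow> real \<Rightarrow> 's \<Rightarrow> 's \<Rightarrow> real" where
  "trans_fun Q t x y = (\<Sum>k. t ^ k / fact k * mpow Q k x y)"

text \<open>Sample paths are right-continuous step functions on [0,\<infinity>) with left limits
  (locally constant to the right of every t \<ge> 0 and to the left of every t > 0).\<close>
definition regular_path :: "(real \<Rightarrow> 's) \<Rightarrow> bool" where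
  "regular_path w \<longleftrightarrow>
     (\<forall>t\<ge>0. \<exists>\<delta>>0. \<forall>u. t \<le> u \<and> u < t + \<delta> \<longrightarrow> w u = w t) \<and>
     (\<forall>t>0. \<exists>\<delta>>0. \<forall>u v. t - \<delta> < u \<and> u < t \<and> t - \<delta> < v \<and> v < t \<longrightarrow> w u = w v)"

definition ctmc :: "('s::finite \<Rightarrow> 's \<Rightarrow> real) \<Rightarrow> 's \<Rightarrow> 'w measure \<Rightarrow> (real \<Rightarrow> 'w \<Rightarrow> 's) \<Rightarrow> bool" where
  "ctmc Q y M X \<longleftrightarrow> prob_space M \<and>
     (\<forall>t\<ge>0. X t \<in> M \<rightarrow>\<^sub>M count_space UNIV) \<and>
     (\<forall>\<omega>\<in>space M. regular_path (\<lambda>t. X t \<omega>)) \<and>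
     (\<forall>(n::nat) (t::nat \<Rightarrow> real) (x::nat \<Rightarrow> 's).
        t 0 = 0 \<and> (\<forall>i<n. t i \<le> t (Suc i)) \<longrightarrow>
        measure M {\<omega>\<in>space M. \<forall>i\<le>n. X (t i) \<omega> = x i}
          = (if x 0 = y then 1 else 0) * (\<Prod>i<n. trans_fun Q (t (Suc i) - t i) (x i) (x (Suc i))))"

definition occ :: "real \<Rightarrow> (real \<Rightarrow> 'w \<Rightarrow> 's) \<Rightarrow> 'w \<Rightarrow> 's \<Rightarrow> real" where
  "occ s X \<omega> x = measure lborel {t. 0 < t \<and> t < s \<and> X t \<omega> = x}"

end

theory Submission
  imports Defs
begin

lemma mpow_Suc_left: "mpow Q (Suc k) x y = (\<Sum>z\<in>UNIV. Q x z * mpow Q k z y)"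
proof (induction k arbitrary: y)
  case 0
  have "(\<Sum>z\<in>UNIV. (if x = z then 1 else 0) * Q z y) = (\<Sum>z\<in>UNIV. if x = z then Q z y else 0)"
    by (intro sum.cong) auto
  moreover have "(\<Sum>z\<in>UNIV. Q x z * (if z = y then 1 else 0)) = (\<Sum>z\<in>UNIV. if z = y then Q x z else 0)"
    by (intro sum.cong) auto
  ultimately show ?case by simp
next
  case (Suc k)
  have "mpow Q (Suc (Suc k)) x y = (\<Sum>u\<in>UNIV. (\<Sum>z\<in>UNIV. Q x z * mpow Q k z u) * Q u y)"
    using Suc by simp
  also have "\<dots> = (\<Sum>z\<in>UNIV. Q x z * (\<Sum>u\<in>UNIV. mpow Q k z u * Q u y))"
    by (simp add: sum_distrib_left sum_distrib_right mult.assoc) (rule sum.swap)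
  finally show ?case by simp
qed

lemma mpow_bound:
  fixes Q :: "'s::finite \<Rightarrow> 's \<Rightarrow> real"
  defines "R \<equiv> (\<Sum>a\<in>UNIV. \<Sum>b\<in>UNIV. \<bar>Q a b\<bar>)"
  shows "\<bar>mpow Q k x y\<bar> \<le> R ^ k"
proof (induction k arbitrary: y)
  case 0 then show ?case by simp
next
  case (Suc k)
  have R0: "0 \<le> R" unfolding R_def by (simp add: sum_nonneg)
  have "\<bar>mpow Q (Suc k) x y\<bar> \<le> (\<Sum>z\<in>UNIV. \<bar>mpow Q k x z\<bar> * \<bar>Q z y\<bar>)"
    by (simp add: abs_mult[symmetric])
  also have "\<dots> \<le> (\<Sum>z\<in>UNIV. R ^ k * \<bar>Q z y\<bar>)"
    by (intro sum_mono mult_right_mono Suc) auto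
  also have "\<dots> = R ^ k * (\<Sum>z\<in>UNIV. \<bar>Q z y\<bar>)" by (simp add: sum_distrib_left)
  also have "(\<Sum>z\<in>UNIV. \<bar>Q z y\<bar>) \<le> R" unfolding R_def
    by (intro sum_mono member_le_sum) auto
  then have "R ^ k * (\<Sum>z\<in>UNIV. \<bar>Q z y\<bar>) \<le> R ^ k * R" using R0 by (intro mult_left_mono) auto
  finally show ?case by (simp add: mult.commute)
qed

lemma summable_trans:
  fixes Q :: "'s::finite \<Rightarrow> 's \<Rightarrow> real"
  shows "summable (\<lambda>k. t ^ k / fact k * mpow Q k x y)"
proof -
  define R where "R = (\<Sum>a\<in>UNIV. \<Sum>b\<in>UNIV. \<bar>Q a b\<bar>)"
  have "summable (\<lambda>k. inverse (fact k) * (\<bar>t\<bar> * R) ^ k)" by (rule summable_exp)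
  then show ?thesis
  proof (rule summable_comparison_test'[where N=0])
    fix k :: nat
    have "norm (t ^ k / fact k * mpow Q k x y) = \<bar>t\<bar> ^ k / fact k * \<bar>mpow Q k x y\<bar>"
      by (simp add: abs_mult power_abs)
    also have "\<dots> \<le> \<bar>t\<bar> ^ k / fact k * R ^ k"
      using mpow_bound[of Q k x y] by (intro mult_left_mono) (auto simp: R_def)
    also have "\<dots> = inverse (fact k) * (\<bar>t\<bar> * R) ^ k" by (simp add: power_mult_distrib field_simps)
    finally show "norm (t ^ k / fact k * mpow Q k x y) \<le> inverse (fact k) * (\<bar>t\<bar> * R) ^ k" .
  qed
qed

lemma pi_pos:
  fixes Q :: "'s::finite \<Rightarrow> 's \<Rightarrow> real"
  assumes "generator Q" "irreducible_gen Q" "stationary Q \<pi>"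
  shows "\<pi> x > 0"
proof (rule ccontr)
  assume "\<not> \<pi> x > 0"
  have nn: "\<And>a. \<pi> a \<ge> 0" using assms(3) by (simp add: stationary_def)
  have Qnn: "\<And>a b. a \<noteq> b \<Longrightarrow> Q a b \<ge> 0" using assms(1) by (simp add: generator_def)
  have zero: "\<pi> b = 0 \<Longrightarrow> Q a b > 0 \<Longrightarrow> a \<noteq> b \<Longrightarrow> \<pi> a = 0" for a b
  proof -
    assume b: "\<pi> b = 0" and q: "Q a b > 0" and ab: "a \<noteq> b"
    have "(\<Sum>c\<in>UNIV. \<pi> c * Q c b) = 0" using assms(3) by (simp add: stationary_def)
    also have "(\<Sum>c\<in>UNIV. \<pi> c * Q c b) = (\<Sum>c\<in>UNIV - {b}. \<pi> c * Q c b)"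
      by (subst sum.remove[of _ b]) (auto simp: b)
    finally have s: "(\<Sum>c\<in>UNIV - {b}. \<pi> c * Q c b) = 0" .
    have "\<forall>c\<in>UNIV - {b}. \<pi> c * Q c b = 0"
      using iffD1[OF sum_nonneg_eq_0_iff s] nn Qnn by (auto intro: mult_nonneg_nonneg)
    then have "\<pi> a * Q a b = 0" using ab by auto
    then show "\<pi> a = 0" using q by simp
  qed
  have px: "\<pi> x = 0" using \<open>\<not> \<pi> x > 0\<close> nn[of x] by simp
  have "\<pi> a = 0" for a
  proof -
    have "(a, x) \<in> {(a, b). a \<noteq> b \<and> Q a b > 0}\<^sup>*" using assms(2) by (simp add: irreducible_gen_def)
    then show ?thesis
    proof (induction rule: converse_rtrancl_induct)
      case base then show ?case by (rule px)
    next
      case (step a b) then show ?case using zero by auto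
    qed
  qed
  then have "(\<Sum>a\<in>UNIV. \<pi> a) = 0" by simp
  then show False using assms(3) by (simp add: stationary_def)
qed

lemma mpow_rev:
  assumes pos: "\<And>x. \<pi> x > 0"
  shows "\<pi> a * mpow (reversed_gen Q \<pi>) k a b = \<pi> b * mpow Q k b a"
proof (induction k arbitrary: b)
  case 0 then show ?case by simp
next
  case (Suc k)
  have "\<pi> a * mpow (reversed_gen Q \<pi>) (Suc k) a b
      = (\<Sum>z\<in>UNIV. (\<pi> a * mpow (reversed_gen Q \<pi>) k a z) * reversed_gen Q \<pi> z b)"
    by (simp add: sum_distrib_left mult.assoc)
  also have "\<dots> = (\<Sum>z\<in>UNIV. \<pi> z * mpow Q k z a * (\<pi> b * Q b z / \<pi> z))"
    by (intro sum.cong refl) (simp add: Suc.IH reversed_gen_def)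
  also have "\<dots> = (\<Sum>z\<in>UNIV. \<pi> b * (Q b z * mpow Q k z a))"
    using pos by (intro sum.cong refl) (simp add: field_simps less_imp_neq[OF pos, symmetric])
  also have "\<dots> = \<pi> b * mpow Q (Suc k) b a"
    by (simp only: mpow_Suc_left sum_distrib_left)
  finally show ?case .
qed

lemma trans_rev:
  assumes pos: "\<And>x. \<pi> x > 0"
  shows "\<pi> a * trans_fun (reversed_gen Q \<pi>) t a b = \<pi> b * trans_fun Q t b a"
proof -
  have "\<pi> a * trans_fun (reversed_gen Q \<pi>) t a b = (\<Sum>k. \<pi> a * (t ^ k / fact k * mpow (reversed_gen Q \<pi>) k a b))"
    unfolding trans_fun_def by (rule suminf_mult[symmetric, OF summable_trans])
  also have "\<dots> = (\<Sum>k. \<pi> b * (t ^ k / fact k * mpow Q k b a))"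
    using mpow_rev[where \<pi>=\<pi>, OF pos] by (intro suminf_cong) (metis mult.left_commute)
  also have "\<dots> = \<pi> b * trans_fun Q t b a"
    unfolding trans_fun_def by (rule suminf_mult[OF summable_trans])
  finally show ?thesis .
qed

lemma telescope:
  assumes "\<And>a b. \<pi> a * P' a b = \<pi> b * P b a"
  shows "\<pi> (x m) * (\<Prod>i<m. P' (x (Suc i)) (x i)) = \<pi> (x 0) * (\<Prod>i<m. P (x i) (x (Suc i)))"
proof (induction m)
  case 0 then show ?case by simp
next
  case (Suc m)
  have "\<pi> (x (Suc m)) * (\<Prod>i<Suc m. P' (x (Suc i)) (x i))
      = (\<pi> (x (Suc m)) * P' (x (Suc m)) (x m)) * (\<Prod>i<m. P' (x (Suc i)) (x i))"
    by (simp add: mult_ac)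
  also have "\<dots> = P (x m) (x (Suc m)) * (\<pi> (x m) * (\<Prod>i<m. P' (x (Suc i)) (x i)))"
    by (simp add: assms mult_ac)
  also have "\<dots> = \<pi> (x 0) * (\<Prod>i<Suc m. P (x i) (x (Suc i)))"
    by (simp add: Suc mult_ac)
  finally show ?case .
qed

lemma fidi_sum:
  fixes Q :: "'s::finite \<Rightarrow> 's \<Rightarrow> real"
  assumes c: "ctmc Q y M X" and t0: "t 0 = 0" and mono: "\<forall>i<m. t i \<le> t (Suc i)"
  shows "measure M {\<omega>\<in>space M. \<forall>i\<le>m. X (t i) \<omega> \<in> A i}
    = (\<Sum>x\<in>{x\<in>PiE {..m} A. x 0 = y}. \<Prod>i<m. trans_fun Q (t (Suc i) - t i) (x i) (x (Suc i)))"
proof -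
  interpret prob_space M using c by (simp add: ctmc_def)
  have meas: "\<And>t. t \<ge> 0 \<Longrightarrow> X t \<in> M \<rightarrow>\<^sub>M count_space UNIV" using c by (simp add: ctmc_def)
  have fidi: "\<And>x. measure M {\<omega>\<in>space M. \<forall>i\<le>m. X (t i) \<omega> = x i}
     = (if x 0 = y then 1 else 0) * (\<Prod>i<m. trans_fun Q (t (Suc i) - t i) (x i) (x (Suc i)))"
    using c t0 mono unfolding ctmc_def by blast
  have tnn: "i \<le> m \<Longrightarrow> t i \<ge> 0" for i
  proof (induction i)
    case 0 then show ?case by (simp add: t0)
  next
    case (Suc i) then show ?case using mono by (metis Suc_le_lessD less_imp_le_nat order_trans)
  qed
  define E where "E x = {\<omega>\<in>space M. \<forall>i\<le>m. X (t i) \<omega> = x i}" for x :: "nat \<Rightarrow> 's"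
  have Esets: "E x \<in> sets M" for x
  proof -
    have "E x = (\<Inter>i\<in>{..m}. X (t i) -` {x i} \<inter> space M)"
      unfolding E_def by auto
    also have "\<dots> \<in> sets M"
      by (intro sets.finite_INT) (auto intro!: measurable_sets[OF meas] tnn)
    finally show ?thesis .
  qed
  have fin: "finite (PiE {..m} A)" by (intro finite_PiE) auto
  have eq: "{\<omega>\<in>space M. \<forall>i\<le>m. X (t i) \<omega> \<in> A i} = (\<Union>x\<in>PiE {..m} A. E x)"
  proof safe
    fix \<omega> assume "\<omega> \<in> space M" "\<forall>i\<le>m. X (t i) \<omega> \<in> A i"
    then show "\<omega> \<in> (\<Union>x\<in>PiE {..m} A. E x)"
      by (intro UN_I[of "restrict (\<lambda>i. X (t i) \<omega>) {..m}"]) (auto simp: E_def)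
  qed (auto simp: E_def PiE_iff)
  have disj: "disjoint_family_on E (PiE {..m} A)"
  unfolding disjoint_family_on_def
  proof (intro ballI impI)
    fix x x' assume x: "x \<in> PiE {..m} A" "x' \<in> PiE {..m} A" "x \<noteq> x'"
    then obtain i where "i \<le> m" "x i \<noteq> x' i"
      by (metis PiE_ext atMost_iff)
    then show "E x \<inter> E x' = {}" unfolding E_def by auto
  qed
  have "measure M {\<omega>\<in>space M. \<forall>i\<le>m. X (t i) \<omega> \<in> A i} = (\<Sum>x\<in>PiE {..m} A. measure M (E x))"
    unfolding eq by (intro finite_measure_finite_Union fin disj) (auto intro: Esets)
  also have "\<dots> = (\<Sum>x\<in>PiE {..m} A. if x 0 = y then (\<Prod>i<m. trans_fun Q (t (Suc i) - t i) (x i) (x (Suc i))) else 0)"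
    by (intro sum.cong refl) (simp add: E_def fidi)
  also have "\<dots> = (\<Sum>x\<in>{x\<in>PiE {..m} A. x 0 = y}. \<Prod>i<m. trans_fun Q (t (Suc i) - t i) (x i) (x (Suc i)))"
    by (rule sum.inter_filter[OF fin, symmetric])
  finally show ?thesis .
qed

lemma allA1: "((\<forall>i\<le>m. f i \<in> A i) \<and> f m = w) \<longleftrightarrow> (\<forall>i\<le>(m::nat). f i \<in> A i \<inter> (if i = m then {w} else UNIV))"
  by (metis (full_types) Int_iff UNIV_I le_refl singleton_iff)

lemma grid_rev:
  fixes Q :: "'s::finite \<Rightarrow> 's \<Rightarrow> real"
  assumes pos: "\<And>x. \<pi> x > 0" and cX: "ctmc Q y M X" and cY: "ctmc (reversed_gen Q \<pi>) w N Y"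
    and h: "h \<ge> 0"
  shows "\<pi> y * measure M {\<omega>\<in>space M. (\<forall>i\<le>m. X (real i * h) \<omega> \<in> A i) \<and> X (real m * h) \<omega> = w}
       = \<pi> w * measure N {\<omega>\<in>space N. (\<forall>j\<le>m. Y (real j * h) \<omega> \<in> A (m - j)) \<and> Y (real m * h) \<omega> = y}"
proof -
  define A1 where "A1 i = A i \<inter> (if i = m then {w} else UNIV)" for i
  define B1 where "B1 j = A (m - j) \<inter> (if j = m then {y} else UNIV)" for j
  define P where "P = trans_fun Q h"
  define P' where "P' = trans_fun (reversed_gen Q \<pi>) h"
  define S1 where "S1 = {x\<in>PiE {..m} A1. x 0 = y}"
  define S2 where "S2 = {x\<in>PiE {..m} B1. x 0 = w}"
  have tt: "(1 + real i) * h - real i * h = h" for i by (simp add: algebra_simps)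
  have mono: "\<forall>i<m. real i * h \<le> real (Suc i) * h" using h by (auto intro: mult_right_mono)
  have "{\<omega>\<in>space M. (\<forall>i\<le>m. X (real i * h) \<omega> \<in> A i) \<and> X (real m * h) \<omega> = w}
      = {\<omega>\<in>space M. \<forall>i\<le>m. X (real i * h) \<omega> \<in> A1 i}"
    unfolding A1_def
  proof (rule Collect_cong)
    fix \<omega> show "(\<omega> \<in> space M \<and> (\<forall>i\<le>m. X (real i * h) \<omega> \<in> A i) \<and> X (real m * h) \<omega> = w) =
        (\<omega> \<in> space M \<and> (\<forall>i\<le>m. X (real i * h) \<omega> \<in> A i \<inter> (if i = m then {w} else UNIV)))"
      by (simp only: allA1[of m "\<lambda>i. X (real i * h) \<omega>" A w])
  qed
  then have L: "measure M {\<omega>\<in>space M. (\<forall>i\<le>m. X (real i * h) \<omega> \<in> A i) \<and> X (real m * h) \<omega> = w}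
      = (\<Sum>x\<in>S1. \<Prod>i<m. P (x i) (x (Suc i)))"
    using fidi_sum[OF cX, of "\<lambda>i. real i * h" m A1] mono by (simp add: tt S1_def P_def)
  have "{\<omega>\<in>space N. (\<forall>j\<le>m. Y (real j * h) \<omega> \<in> A (m - j)) \<and> Y (real m * h) \<omega> = y}
      = {\<omega>\<in>space N. \<forall>j\<le>m. Y (real j * h) \<omega> \<in> B1 j}"
    unfolding B1_def
  proof (rule Collect_cong)
    fix \<omega> show "(\<omega> \<in> space N \<and> (\<forall>j\<le>m. Y (real j * h) \<omega> \<in> A (m - j)) \<and> Y (real m * h) \<omega> = y) =
        (\<omega> \<in> space N \<and> (\<forall>j\<le>m. Y (real j * h) \<omega> \<in> A (m - j) \<inter> (if j = m then {y} else UNIV)))"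
      by (simp only: allA1[of m "\<lambda>i. Y (real i * h) \<omega>" "\<lambda>j. A (m - j)" y])
  qed
  then have R: "measure N {\<omega>\<in>space N. (\<forall>j\<le>m. Y (real j * h) \<omega> \<in> A (m - j)) \<and> Y (real m * h) \<omega> = y}
      = (\<Sum>x\<in>S2. \<Prod>i<m. P' (x i) (x (Suc i)))"
    using fidi_sum[OF cY, of "\<lambda>i. real i * h" m B1] mono by (simp add: tt S2_def P'_def)
  define rv where "rv x = restrict (\<lambda>j. x (m - j)) {..m}" for x :: "nat \<Rightarrow> 's"
  have rvrv: "x \<in> PiE {..m} C \<Longrightarrow> rv (rv x) = x" for x C
    unfolding rv_def by (rule PiE_ext[of _ "{..m}" C]) (auto simp: PiE_iff)
  have PP: "\<pi> a * P' a b = \<pi> b * P b a" for a b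
    unfolding P_def P'_def by (rule trans_rev[OF pos])
  have "(\<Sum>x\<in>S1. \<pi> y * (\<Prod>i<m. P (x i) (x (Suc i)))) = (\<Sum>x\<in>S2. \<pi> w * (\<Prod>i<m. P' (x i) (x (Suc i))))"
  proof (rule sum.reindex_bij_witness[where i=rv and j=rv])
    fix x assume x: "x \<in> S1"
    then show "rv (rv x) = x" unfolding S1_def using rvrv by blast
    have xP: "x \<in> PiE {..m} A1" and x0: "x 0 = y" using x unfolding S1_def by auto
    have xm: "x m = w" using PiE_mem[OF xP, of m] unfolding A1_def by auto
    have "\<forall>j\<in>{..m}. x (m - j) \<in> B1 j"
    proof
      fix j assume j: "j \<in> {..m}"
      have "x (m - j) \<in> A1 (m - j)" using PiE_mem[OF xP] by simp
      then show "x (m - j) \<in> B1 j" using j x0 unfolding A1_def B1_def by (cases "j = m") auto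
    qed
    then show "rv x \<in> S2" unfolding S2_def rv_def using xm by (simp add: restrict_PiE_iff)
    have "(\<Prod>i<m. P' (rv x i) (rv x (Suc i))) = (\<Prod>j<m. P' (x (Suc (m - Suc j))) (x (m - Suc j)))"
      by (intro prod.cong refl) (auto simp: rv_def Suc_diff_Suc)
    also have "\<dots> = (\<Prod>i<m. P' (x (Suc i)) (x i))"
      by (rule prod.nat_diff_reindex)
    finally show "\<pi> w * (\<Prod>i<m. P' (rv x i) (rv x (Suc i))) = \<pi> y * (\<Prod>i<m. P (x i) (x (Suc i)))"
      using telescope[of \<pi> P' P x m, OF PP] x0 xm by simp
  next
    fix x assume x: "x \<in> S2"
    then show "rv (rv x) = x" unfolding S2_def using rvrv by blast
    have xP: "x \<in> PiE {..m} B1" and x0: "x 0 = w" using x unfolding S2_def by auto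
    have xm: "x m = y" using PiE_mem[OF xP, of m] unfolding B1_def by auto
    have "\<forall>j\<in>{..m}. x (m - j) \<in> A1 j"
    proof
      fix j assume j: "j \<in> {..m}"
      have "x (m - j) \<in> B1 (m - j)" using PiE_mem[OF xP] by simp
      then show "x (m - j) \<in> A1 j" using j x0 unfolding A1_def B1_def by (cases "j = m") auto
    qed
    then show "rv x \<in> S1" unfolding S1_def rv_def using xm by (simp add: restrict_PiE_iff)
  qed
  then show ?thesis
    by (simp add: L R sum_distrib_left)
qed

lemma ceil_interval:
  fixes h t :: real
  assumes h: "h > 0" and t: "0 < t"
  shows "((real k - 1) * h < t \<and> t \<le> real k * h) \<longleftrightarrow> k = nat \<lceil>t / h\<rceil>"
proof -
  have c1: "\<lceil>t / h\<rceil> \<ge> 1" using h t by (simp add: one_le_ceiling zero_less_divide_iff)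
  have "((real k - 1) * h < t \<and> t \<le> real k * h) \<longleftrightarrow> (real k - 1 < t / h \<and> t / h \<le> real k)"
    using h by (simp add: field_simps)
  also have "\<dots> \<longleftrightarrow> \<lceil>t / h\<rceil> = int k"
    by (subst ceiling_eq_iff) auto
  also have "\<dots> \<longleftrightarrow> k = nat \<lceil>t / h\<rceil>" using c1 by linarith
  finally show ?thesis .
qed

lemma step_sum_in:
  fixes h t :: real and a :: "nat \<Rightarrow> real"
  assumes h: "h > 0" and t: "0 < t" "t \<le> real m * h"
  shows "(\<Sum>k\<in>{1..m}. indicator {(real k - 1) * h <.. real k * h} t * a k) = a (nat \<lceil>t / h\<rceil>)"
proof -
  define k0 where "k0 = nat \<lceil>t / h\<rceil>"
  have c1: "\<lceil>t / h\<rceil> \<ge> 1" using h t by (simp add: one_le_ceiling zero_less_divide_iff)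
  have "t / h \<le> real m" using h t by (simp add: field_simps)
  then have c2: "\<lceil>t / h\<rceil> \<le> int m" by (simp add: ceiling_le_iff)
  have "1 \<le> k0" unfolding k0_def using c1 by (simp add: le_nat_iff)
  moreover have "k0 \<le> m" unfolding k0_def using c2 by (simp add: nat_le_iff)
  ultimately have k0: "k0 \<in> {1..m}" by simp
  have "(\<Sum>k\<in>{1..m}. indicator {(real k - 1) * h <.. real k * h} t * a k) = (\<Sum>k\<in>{1..m}. if k = k0 then a k else 0)"
  proof (intro sum.cong refl)
    fix k
    show "indicator {(real k - 1) * h <.. real k * h} t * a k = (if k = k0 then a k else 0)"
      using ceil_interval[OF h t(1), of k] unfolding k0_def by (simp add: indicator_def)
  qed
  also have "\<dots> = a k0" using k0 by (simp add: sum.delta')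
  finally show ?thesis unfolding k0_def .
qed

lemma step_sum_out:
  fixes h t :: real and a :: "nat \<Rightarrow> real"
  assumes h: "h > 0" and t: "\<not> (0 < t \<and> t \<le> real m * h)"
  shows "(\<Sum>k\<in>{1..m}. indicator {(real k - 1) * h <.. real k * h} t * a k) = 0"
proof (intro sum.neutral ballI)
  fix k assume k: "k \<in> {1..m}"
  have "t \<notin> {(real k - 1) * h <.. real k * h}"
  proof
    assume "t \<in> {(real k - 1) * h <.. real k * h}"
    then have t1: "(real k - 1) * h < t" and t2: "t \<le> real k * h" by auto
    have "0 \<le> (real k - 1) * h" using k h by auto
    moreover have "real k * h \<le> real m * h" using k h by (auto intro: mult_right_mono)
    ultimately show False using t t1 t2 by linarith
  qed
  then show "indicator {(real k - 1) * h <.. real k * h} t * a k = 0" by simp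
qed

lemma Ioc_fin: "emeasure lborel {a <.. b::real} < \<top>"
  by (cases "a \<le> b") auto

lemma right_sums:
  fixes w :: "real \<Rightarrow> 's"
  assumes rp: "regular_path w" and s: "s \<ge> 0"
  shows "(\<lambda>n. \<Sum>k\<in>{1..2^n}. s / 2^n * (if w (real k * (s / 2^n)) = x then 1 else 0))
           \<longlonglongrightarrow> measure lborel {t. 0 < t \<and> t < s \<and> w t = x}"
proof (cases "s = 0")
  case True
  then have e: "{t. 0 < t \<and> t < s \<and> w t = x} = {}" by auto
  show ?thesis unfolding e using True by simp
next
  case False
  then have spos: "s > 0" using s by simp
  define h where "h n = s / 2^n" for n :: nat
  define a where "a n k = (if w (real k * h n) = x then 1 else 0 :: real)" for n k
  define g where "g n t = (\<Sum>k\<in>{1..2^n}. indicator {(real k - 1) * h n <.. real k * h n} t * a n k)" for n t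
  define E where "E = {t. 0 < t \<and> t \<le> s \<and> w t = x}"
  define f where "f = (indicator E :: real \<Rightarrow> real)"
  have hpos: "h n > 0" for n using spos by (simp add: h_def)
  have hm: "real (2^n) * h n = s" for n by (simp add: h_def)
  have h0: "h \<longlonglongrightarrow> 0" unfolding h_def[abs_def] by (rule LIMSEQ_divide_realpow_zero) simp
  have in_case: "g n t = a n (nat \<lceil>t / h n\<rceil>)" if t0: "0 < t" "t \<le> s" for n t
  proof -
    have "t \<le> real (2^n) * h n" by (simp only: hm t0)
    from step_sum_in[OF hpos t0(1) this] show ?thesis by (simp add: g_def)
  qed
  have out_case: "g n t = 0" if t0: "\<not> (0 < t \<and> t \<le> s)" for n t
  proof -
    have "\<not> (0 < t \<and> t \<le> real (2^n) * h n)" by (simp only: hm t0) simp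
    from step_sum_out[OF hpos this] show ?thesis by (simp add: g_def)
  qed
  have conv: "(\<lambda>n. g n t) \<longlonglongrightarrow> f t" for t
  proof (cases "0 < t \<and> t \<le> s")
    case True
    then have t0: "0 < t" "t \<le> s" by auto
    obtain \<delta> where \<delta>: "\<delta> > 0" and rc: "\<And>u. t \<le> u \<and> u < t + \<delta> \<Longrightarrow> w u = w t"
      using rp t0 unfolding regular_path_def by (meson less_imp_le)
    have "eventually (\<lambda>n. h n < \<delta>) sequentially" using h0 \<delta> by (rule order_tendstoD)
    then have "eventually (\<lambda>n. g n t = f t) sequentially"
    proof (rule eventually_mono)
      fix n assume hn: "h n < \<delta>"
      define r where "r = real (nat \<lceil>t / h n\<rceil>) * h n"
      have cpos: "\<lceil>t / h n\<rceil> \<ge> 0" using t0 hpos[of n] using divide_pos_pos[OF t0(1) hpos[of n]] by linarith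
      then have r: "r = of_int \<lceil>t / h n\<rceil> * h n" unfolding r_def by simp
      have c: "of_int \<lceil>t / h n\<rceil> - 1 < t / h n" "t / h n \<le> of_int \<lceil>t / h n\<rceil>"
        using ceiling_correct by blast+
      have "t \<le> r" using c(2) pos_divide_le_eq[OF hpos[of n]] unfolding r by blast
      moreover have "r < t + h n" using c(1) unfolding r by (simp add: pos_less_divide_eq[OF hpos] algebra_simps)
      ultimately have "w r = w t" using hn by (intro rc) simp
      then show "g n t = f t" using in_case[OF t0, of n] t0
        unfolding a_def r_def f_def E_def by (simp add: indicator_def)
    qed
    then show ?thesis by (rule tendsto_eventually)
  next
    case False
    then have "f t = 0" unfolding f_def E_def by (auto simp: indicator_def)
    then show ?thesis using out_case[OF False] by simp
  qed
  have gmeas: "g n \<in> borel_measurable lborel" for n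
    unfolding g_def by measurable
  have fmeas: "f \<in> borel_measurable lborel"
    by (rule borel_measurable_LIMSEQ_real[OF conv gmeas])
  then have Esets: "E \<in> sets lborel" unfolding f_def by (simp add: borel_measurable_indicator_iff)
  have bound: "norm (g n t) \<le> indicator {0..s} t" for n t
  proof (cases "0 < t \<and> t \<le> s")
    case True
    then show ?thesis using in_case[of t n] by (simp add: a_def indicator_def)
  next
    case False then show ?thesis using out_case[OF False] by (simp add: indicator_def)
  qed
  have intb: "integrable lborel (indicator {0..s} :: real \<Rightarrow> real)"
    by (intro integrable_real_indicator) (auto simp: s)
  have lim: "(\<lambda>n. integral\<^sup>L lborel (g n)) \<longlonglongrightarrow> integral\<^sup>L lborel f"
  proof (rule integral_dominated_convergence[OF fmeas gmeas intb])
    show "AE x in lborel. (\<lambda>n. g n x) \<longlonglongrightarrow> f x" using conv by simp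
    show "AE x in lborel. norm (g n x) \<le> indicator {0..s} x" for n using bound by simp
  qed
  have ig: "integral\<^sup>L lborel (g n) = (\<Sum>k\<in>{1..2^n}. s / 2^n * (if w (real k * (s / 2^n)) = x then 1 else 0))" for n
  proof -
    have "integral\<^sup>L lborel (g n) = (\<Sum>k\<in>{1..2^n}. integral\<^sup>L lborel (\<lambda>t. indicator {(real k - 1) * h n <.. real k * h n} t * a n k))"
      unfolding g_def
      by (intro Bochner_Integration.integral_sum integrable_mult_left integrable_real_indicator) (auto simp: Ioc_fin)
    also have "\<dots> = (\<Sum>k\<in>{1..2^n}. h n * a n k)"
    proof (intro sum.cong refl)
      fix k
      have "(real k - 1) * h n \<le> real k * h n" using hpos[of n] by (simp add: field_simps)
      then show "integral\<^sup>L lborel (\<lambda>t. indicator {(real k - 1) * h n <.. real k * h n} t * a n k) = h n * a n k"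
        by (simp add: algebra_simps)
    qed
    finally show ?thesis by (simp add: h_def a_def)
  qed
  have iff: "integral\<^sup>L lborel f = measure lborel E" unfolding f_def by simp
  have "measure lborel E = measure lborel {t. 0 < t \<and> t < s \<and> w t = x}"
  proof (rule measure_eq_AE)
    show "AE t in lborel. t \<in> E \<longleftrightarrow> t \<in> {t. 0 < t \<and> t < s \<and> w t = x}"
      using AE_lborel_singleton[of s] by eventually_elim (auto simp: E_def)
    have "{t. 0 < t \<and> t < s \<and> w t = x} = E - {s}" unfolding E_def by auto
    then show "{t. 0 < t \<and> t < s \<and> w t = x} \<in> sets lborel" using Esets by auto
  qed (rule Esets)
  then show ?thesis using lim unfolding ig iff by simp
qed

definition Dg :: "real \<Rightarrow> real set" where
  "Dg s = {t. \<exists>n k. k \<le> (2::nat)^n \<and> t = real k * (s / 2^n)}"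

definition Lsum :: "real \<Rightarrow> (real \<Rightarrow> 's) \<Rightarrow> nat \<Rightarrow> 's \<Rightarrow> real" where
  "Lsum s p n x = (\<Sum>k<2^n. s / 2^n * (if p (real k * (s / 2^n)) = x then 1 else 0))"

definition Fo :: "real \<Rightarrow> (real \<Rightarrow> 's) \<Rightarrow> 's \<Rightarrow> real" where
  "Fo s p = (\<lambda>x. lim (\<lambda>n. Lsum s p n x))"

lemma Dg_grid: "k \<le> 2^n \<Longrightarrow> real k * (s / 2^n) \<in> Dg s"
  unfolding Dg_def by blast

lemma Dg_bounds: "s \<ge> 0 \<Longrightarrow> t \<in> Dg s \<Longrightarrow> 0 \<le> t \<and> t \<le> s"
proof -
  assume s: "s \<ge> 0" and "t \<in> Dg s"
  then obtain n k where k: "k \<le> (2::nat)^n" and t: "t = real k * (s / 2^n)" unfolding Dg_def by blast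
  have "real k \<le> 2^n" using k by (metis of_nat_le_iff of_nat_numeral of_nat_power)
  then have "real k * (s / 2^n) \<le> 2^n * (s / 2^n)" using s by (intro mult_right_mono) auto
  then show ?thesis using t s by simp
qed

lemma Dg_s: "s \<in> Dg s"
  using Dg_grid[of 1 0 s] by simp

lemma Dg_rev: "t \<in> Dg s \<Longrightarrow> s - t \<in> Dg s"
proof -
  assume "t \<in> Dg s"
  then obtain n k where k: "k \<le> (2::nat)^n" and t: "t = real k * (s / 2^n)" unfolding Dg_def by blast
  have "s - t = real (2^n - k) * (s / 2^n)" using k t by (simp add: of_nat_diff field_simps)
  then show ?thesis using Dg_grid[of "2^n - k" n s] by simp
qed

lemma lsum_conv:
  fixes w :: "real \<Rightarrow> 's"
  assumes rp: "regular_path w" and s: "s \<ge> 0"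
  shows "(\<lambda>n. Lsum s (restrict w (Dg s)) n x) \<longlonglongrightarrow> measure lborel {t. 0 < t \<and> t < s \<and> w t = x}"
proof -
  define f where "f n k = s / 2^n * (if w (real k * (s / 2^n)) = x then 1 else 0 :: real)" for n k
  define R where "R n = (\<Sum>k\<in>{1..2^n}. f n k)" for n
  have eqL: "Lsum s (restrict w (Dg s)) n x = R n + (f n 0 - f n (2^n))" for n
  proof -
    have "Lsum s (restrict w (Dg s)) n x = (\<Sum>k<2^n. f n k)"
      unfolding Lsum_def f_def
    proof (intro sum.cong refl)
      fix k assume "k \<in> {..<(2::nat)^n}"
      then have "real k * (s / 2^n) \<in> Dg s" by (intro Dg_grid) simp
      then show "s / 2 ^ n * (if restrict w (Dg s) (real k * (s / 2 ^ n)) = x then 1 else 0) =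
          s / 2 ^ n * (if w (real k * (s / 2 ^ n)) = x then 1 else 0)" by simp
    qed
    moreover have "(\<Sum>k<Suc (2^n). f n k) = (\<Sum>k<2^n. f n k) + f n (2^n)" by simp
    moreover have "(\<Sum>k<Suc (2^n). f n k) = f n 0 + R n"
      unfolding R_def by (simp only: sum.lessThan_Suc_shift sum.atLeast1_atMost_eq[symmetric] One_nat_def)
    ultimately show ?thesis by simp
  qed
  have R: "R \<longlonglongrightarrow> measure lborel {t. 0 < t \<and> t < s \<and> w t = x}"
    unfolding R_def f_def by (rule right_sums[OF rp s])
  have b: "\<bar>f n 0 - f n (2^n)\<bar> \<le> 2 * (s / 2^n)" for n
  proof -
    have q: "0 \<le> s / 2^n" using s by simp
    have "0 \<le> f n k \<and> f n k \<le> s / 2^n" for k unfolding f_def using q by simp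
    from this[of 0] this[of "2^n"] show ?thesis by linarith
  qed
  have lim0: "(\<lambda>n. 2 * (s / 2^n)) \<longlonglongrightarrow> 0"
    using tendsto_mult[OF tendsto_const LIMSEQ_divide_realpow_zero[of 2 s], of 2] by simp
  have ev: "eventually (\<lambda>n. norm (f n 0 - f n (2^n)) \<le> 2 * (s / 2^n)) sequentially"
    using b by (intro always_eventually allI) simp
  have z: "(\<lambda>n. f n 0 - f n (2^n)) \<longlonglongrightarrow> 0"
    by (rule Lim_null_comparison[OF ev lim0])
  show ?thesis unfolding eqL using tendsto_add[OF R z] by simp
qed

lemma lsum_conv_rev:
  fixes w :: "real \<Rightarrow> 's"
  assumes rp: "regular_path w" and s: "s \<ge> 0"
  shows "(\<lambda>n. Lsum s (\<lambda>t\<in>Dg s. w (s - t)) n x) \<longlonglongrightarrow> measure lborel {t. 0 < t \<and> t < s \<and> w t = x}"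
proof -
  define g where "g n k = s / 2^n * (if w (real k * (s / 2^n)) = x then 1 else 0 :: real)" for n k
  have "Lsum s (\<lambda>t\<in>Dg s. w (s - t)) n x = (\<Sum>k\<in>{1..2^n}. g n k)" for n
  proof -
    have "Lsum s (\<lambda>t\<in>Dg s. w (s - t)) n x = (\<Sum>k<2^n. g n (2^n - k))"
      unfolding Lsum_def
    proof (intro sum.cong refl)
      fix k assume k: "k \<in> {..<(2::nat)^n}"
      have "s - real k * (s / 2^n) = real (2^n - k) * (s / 2^n)"
        using k by (simp add: of_nat_diff field_simps)
      moreover have "real k * (s / 2^n) \<in> Dg s" using k by (intro Dg_grid) simp
      ultimately show "s / 2 ^ n * (if (\<lambda>t\<in>Dg s. w (s - t)) (real k * (s / 2 ^ n)) = x then 1 else 0) = g n (2^n - k)"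
        unfolding g_def by simp
    qed
    also have "\<dots> = (\<Sum>k<2^n. g n (Suc (2^n - Suc k)))"
      by (intro sum.cong refl) (simp add: Suc_diff_Suc)
    also have "\<dots> = (\<Sum>k<2^n. g n (Suc k))"
      by (rule sum.nat_diff_reindex)
    also have "\<dots> = (\<Sum>k\<in>{1..2^n}. g n k)"
      by (simp only: sum.atLeast1_atMost_eq One_nat_def)
    finally show ?thesis .
  qed
  then show ?thesis unfolding g_def using right_sums[OF rp s] by simp
qed

lemma Fo_X:
  assumes "regular_path w" "s \<ge> 0"
  shows "Fo s (restrict w (Dg s)) = (\<lambda>x. measure lborel {t. 0 < t \<and> t < s \<and> w t = x})"
  unfolding Fo_def using lsum_conv[OF assms] by (intro ext limI) 

lemma Fo_Y:
  assumes "regular_path w" "s \<ge> 0"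
  shows "Fo s (\<lambda>t\<in>Dg s. w (s - t)) = (\<lambda>x. measure lborel {t. 0 < t \<and> t < s \<and> w t = x})"
  unfolding Fo_def using lsum_conv_rev[OF assms] by (intro ext limI)

lemma Fo_meas:
  assumes s: "s \<ge> 0"
  shows "Fo s \<in> PiM (Dg s) (\<lambda>_. count_space (UNIV::'s set)) \<rightarrow>\<^sub>M PiM UNIV (\<lambda>_::'s. borel)"
proof -
  have comp: "(\<lambda>p. Lsum s p n x) \<in> borel_measurable (PiM (Dg s) (\<lambda>_. count_space (UNIV::'s set)))" for n x
    unfolding Lsum_def
  proof (intro borel_measurable_sum borel_measurable_times borel_measurable_const measurable_If)
    fix k assume "k \<in> {..<(2::nat)^n}"
    then have "real k * (s / 2^n) \<in> Dg s" by (intro Dg_grid) simp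
    then have cm: "(\<lambda>p. p (real k * (s / 2^n))) \<in> PiM (Dg s) (\<lambda>_. count_space (UNIV::'s set)) \<rightarrow>\<^sub>M count_space UNIV"
      by (rule measurable_component_singleton)
    show "{p \<in> space (PiM (Dg s) (\<lambda>_. count_space (UNIV::'s set))). p (real k * (s / 2^n)) = x}
        \<in> sets (PiM (Dg s) (\<lambda>_. count_space (UNIV::'s set)))"
      by (rule measurable_sets_Collect[OF cm]) simp
  qed
  show ?thesis unfolding Fo_def
  proof (rule measurable_PiM_single')
    fix x :: 's
    show "(\<lambda>p. lim (\<lambda>n. Lsum s p n x)) \<in> borel_measurable (PiM (Dg s) (\<lambda>_. count_space (UNIV::'s set)))"
      by (rule borel_measurable_lim_metric) (rule comp)
  qed simp
qed

lemma em_path: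
  assumes M: "prob_space M" and pm: "p \<in> M \<rightarrow>\<^sub>M N'" and E: "E \<in> sets M" and C: "C \<in> sets N'"
    and c: "c \<ge> 0"
  shows "emeasure (scale_measure (ennreal c) (distr (density M (indicator E)) N' p)) C
         = ennreal (c * measure M {\<omega>\<in>space M. p \<omega> \<in> C \<and> \<omega> \<in> E})"
proof -
  interpret prob_space M by (rule M)
  have pm': "p \<in> density M (indicator E) \<rightarrow>\<^sub>M N'" using pm by simp
  have S: "p -` C \<inter> space M \<in> sets M" using measurable_sets[OF pm C] .
  have eq: "E \<inter> (p -` C \<inter> space M) = {\<omega>\<in>space M. p \<omega> \<in> C \<and> \<omega> \<in> E}" by blast
  have "emeasure (scale_measure (ennreal c) (distr (density M (indicator E)) N' p)) C
      = ennreal c * emeasure (density M (indicator E)) (p -` C \<inter> space M)"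
    by (simp add: emeasure_distr[OF pm' C])
  also have "\<dots> = ennreal c * emeasure M {\<omega>\<in>space M. p \<omega> \<in> C \<and> \<omega> \<in> E}"
    by (simp only: emeasure_restricted[OF E S] eq)
  also have "\<dots> = ennreal (c * measure M {\<omega>\<in>space M. p \<omega> \<in> C \<and> \<omega> \<in> E})"
    by (simp add: emeasure_eq_measure ennreal_mult c)
  finally show ?thesis .
qed

lemma lift_grid:
  assumes "k \<le> (2::nat)^n" "n \<le> N"
  shows "k * 2^(N-n) \<le> (2::nat)^N \<and> real k * (s / 2^n) = real (k * 2^(N-n)) * (s / 2^N)"
proof -
  have N: "(2::nat)^N = 2^n * 2^(N-n)" using assms(2) by (simp add: power_add[symmetric])
  have "k * 2^(N-n) \<le> (2::nat)^N" unfolding N using assms(1) by simp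
  moreover have "real k * (s / 2^n) = real (k * 2^(N-n)) * (s / 2^N)"
    using N by (simp add: field_simps) (metis of_nat_mult of_nat_numeral of_nat_power)
  ultimately show ?thesis by blast
qed

lemma grid_cover:
  assumes "finite J" "J \<subseteq> Dg s"
  shows "\<exists>N. \<forall>t\<in>J. \<exists>k\<le>(2::nat)^N. t = real k * (s / 2^N)"
  using assms
proof (induction J rule: finite_induct)
  case empty then show ?case by simp
next
  case (insert t J)
  then obtain N0 where N0: "\<forall>t\<in>J. \<exists>k\<le>(2::nat)^N0. t = real k * (s / 2^N0)" by auto
  from insert obtain n k where k: "k \<le> (2::nat)^n" and t: "t = real k * (s / 2^n)"
    unfolding Dg_def by auto
  define N where "N = max N0 n"
  have "\<forall>t\<in>insert t J. \<exists>k\<le>(2::nat)^N. t = real k * (s / 2^N)"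
  proof
    fix u assume "u \<in> insert t J"
    then consider "u = t" | "u \<in> J" by blast
    then show "\<exists>k\<le>(2::nat)^N. u = real k * (s / 2^N)"
    proof cases
      case 1
      from lift_grid[OF k, of N s] show ?thesis unfolding 1 t N_def by auto
    next
      case 2
      then obtain k' where k': "k' \<le> (2::nat)^N0" "u = real k' * (s / 2^N0)" using N0 by blast
      from lift_grid[OF k'(1), of N s] show ?thesis unfolding k'(2) N_def by auto
    qed
  qed
  then show ?case by blast
qed

lemma cyl_set:
  fixes g :: "real \<Rightarrow> 's"
  assumes J: "J \<subseteq> Dg s" and cov: "\<forall>t\<in>J. \<exists>k\<le>m. t = real k * h"
  shows "((\<lambda>t\<in>Dg s. g t) \<in> prod_emb (Dg s) (\<lambda>_. count_space UNIV) J (PiE J A))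
     \<longleftrightarrow> (\<forall>i\<le>m. g (real i * h) \<in> (if real i * h \<in> J then A (real i * h) else UNIV))"
proof -
  have "((\<lambda>t\<in>Dg s. g t) \<in> prod_emb (Dg s) (\<lambda>_. count_space UNIV) J (PiE J A))
      \<longleftrightarrow> restrict (\<lambda>t\<in>Dg s. g t) J \<in> PiE J A"
    by (simp add: prod_emb_iff)
  also have "restrict (\<lambda>t\<in>Dg s. g t) J = restrict g J"
    using J by (auto simp: restrict_def fun_eq_iff)
  also have "restrict g J \<in> PiE J A \<longleftrightarrow> (\<forall>t\<in>J. g t \<in> A t)"
    by (rule restrict_PiE_iff)
  also have "\<dots> \<longleftrightarrow> (\<forall>i\<le>m. g (real i * h) \<in> (if real i * h \<in> J then A (real i * h) else UNIV))"
  proof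
    assume a: "\<forall>t\<in>J. g t \<in> A t"
    show "\<forall>i\<le>m. g (real i * h) \<in> (if real i * h \<in> J then A (real i * h) else UNIV)"
    proof (intro allI impI)
      fix i assume "i \<le> m"
      show "g (real i * h) \<in> (if real i * h \<in> J then A (real i * h) else UNIV)"
        using a by (cases "real i * h \<in> J") simp_all
    qed
  next
    assume a: "\<forall>i\<le>m. g (real i * h) \<in> (if real i * h \<in> J then A (real i * h) else UNIV)"
    show "\<forall>t\<in>J. g t \<in> A t"
    proof
      fix t assume t: "t \<in> J"
      then obtain k where k: "k \<le> m" "t = real k * h" using cov by blast
      have "g (real k * h) \<in> (if real k * h \<in> J then A (real k * h) else UNIV)" using a k(1) by blast
      then show "g t \<in> A t" using t k(2) by simp
    qed
  qed
  finally show ?thesis .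
qed

lemma path_eq:
  fixes Q :: "'s::finite \<Rightarrow> 's \<Rightarrow> real"
  assumes pos: "\<And>x. \<pi> x > 0" and cX: "ctmc Q y M X" and cY: "ctmc (reversed_gen Q \<pi>) w N Y"
    and s: "s \<ge> 0" and C: "C \<in> sets (PiM (Dg s) (\<lambda>_. count_space (UNIV::'s set)))"
  shows "\<pi> y * measure M {\<omega>\<in>space M. (\<lambda>t\<in>Dg s. X t \<omega>) \<in> C \<and> X s \<omega> = w}
       = \<pi> w * measure N {\<omega>\<in>space N. (\<lambda>t\<in>Dg s. Y (s - t) \<omega>) \<in> C \<and> Y s \<omega> = y}"
proof -
  define PD where "PD = PiM (Dg s) (\<lambda>_. count_space (UNIV::'s set))"
  define pX where "pX \<omega> = (\<lambda>t\<in>Dg s. X t \<omega>)" for \<omega>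
  define pY where "pY \<omega> = (\<lambda>t\<in>Dg s. Y (s - t) \<omega>)" for \<omega>
  have PM: "prob_space M" and PN: "prob_space N" using cX cY by (simp_all add: ctmc_def)
  have mX: "t \<ge> 0 \<Longrightarrow> X t \<in> M \<rightarrow>\<^sub>M count_space UNIV" for t using cX by (simp add: ctmc_def)
  have mY: "t \<ge> 0 \<Longrightarrow> Y t \<in> N \<rightarrow>\<^sub>M count_space UNIV" for t using cY by (simp add: ctmc_def)
  have pXm: "pX \<in> M \<rightarrow>\<^sub>M PD" unfolding pX_def PD_def
    by (rule measurable_restrict) (auto intro!: mX dest: Dg_bounds[OF s])
  have pYm: "pY \<in> N \<rightarrow>\<^sub>M PD" unfolding pY_def PD_def
  proof (rule measurable_restrict)
    fix t assume "t \<in> Dg s"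
    then have "s - t \<ge> 0" using Dg_bounds[OF s] by auto
    then show "Y (s - t) \<in> N \<rightarrow>\<^sub>M count_space UNIV" by (rule mY)
  qed
  define EvX where "EvX = {\<omega>\<in>space M. X s \<omega> = w}"
  define EvY where "EvY = {\<omega>\<in>space N. Y s \<omega> = y}"
  have EvXs: "EvX \<in> sets M" unfolding EvX_def using mX[OF s] by (rule measurable_sets_Collect) simp
  have EvYs: "EvY \<in> sets N" unfolding EvY_def using mY[OF s] by (rule measurable_sets_Collect) simp
  define P1 where "P1 = scale_measure (ennreal (\<pi> y)) (distr (density M (indicator EvX)) PD pX)"
  define P2 where "P2 = scale_measure (ennreal (\<pi> w)) (distr (density N (indicator EvY)) PD pY)"
  have setX: "{\<omega>\<in>space M. pX \<omega> \<in> C' \<and> \<omega> \<in> EvX} = {\<omega>\<in>space M. pX \<omega> \<in> C' \<and> X s \<omega> = w}" for C'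
    unfolding EvX_def by blast
  have setY: "{\<omega>\<in>space N. pY \<omega> \<in> C' \<and> \<omega> \<in> EvY} = {\<omega>\<in>space N. pY \<omega> \<in> C' \<and> Y s \<omega> = y}" for C'
    unfolding EvY_def by blast
  have e1: "emeasure P1 C' = ennreal (\<pi> y * measure M {\<omega>\<in>space M. pX \<omega> \<in> C' \<and> X s \<omega> = w})"
    if "C' \<in> sets PD" for C'
    unfolding P1_def using em_path[OF PM pXm EvXs that, of "\<pi> y"] pos[of y] by (simp add: setX)
  have e2: "emeasure P2 C' = ennreal (\<pi> w * measure N {\<omega>\<in>space N. pY \<omega> \<in> C' \<and> Y s \<omega> = y})"
    if "C' \<in> sets PD" for C'
    unfolding P2_def using em_path[OF PN pYm EvYs that, of "\<pi> w"] pos[of w] by (simp add: setY)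
  have "P1 = P2"
  proof (rule measure_eqI_PiM_infinite)
    show "sets P1 = PiM (Dg s) (\<lambda>_. count_space UNIV)" by (simp add: P1_def PD_def)
    show "sets P2 = PiM (Dg s) (\<lambda>_. count_space UNIV)" by (simp add: P2_def PD_def)
    have "emeasure P1 (space PD) \<noteq> \<infinity>" using e1[of "space PD"] by simp
    moreover have "space P1 = space PD" by (simp add: P1_def space_scale_measure)
    ultimately show "finite_measure P1" by (intro finite_measureI) simp
  next
    fix J A assume J: "finite J" "J \<subseteq> Dg s" and A: "\<And>i. i \<in> J \<Longrightarrow> A i \<in> sets (count_space (UNIV::'s set))"
    define C' where "C' = prod_emb (Dg s) (\<lambda>_. count_space (UNIV::'s set)) J (PiE J A)"
    have C's: "C' \<in> sets PD" unfolding C'_def PD_def by (rule sets_PiM_I) (use J in auto)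
    obtain N0 where N0: "\<forall>t\<in>J. \<exists>k\<le>(2::nat)^N0. t = real k * (s / 2^N0)"
      using grid_cover[OF J] by blast
    define m where "m = (2::nat)^N0"
    define h where "h = s / 2^N0"
    have cov: "\<forall>t\<in>J. \<exists>k\<le>m. t = real k * h" using N0 unfolding m_def h_def by blast
    have mh: "real m * h = s" unfolding m_def h_def by simp
    have hnn: "h \<ge> 0" unfolding h_def using s by simp
    define A' where "A' i = (if real i * h \<in> J then A (real i * h) else UNIV)" for i
    have "{\<omega>\<in>space M. pX \<omega> \<in> C' \<and> X s \<omega> = w}
        = {\<omega>\<in>space M. (\<forall>i\<le>m. X (real i * h) \<omega> \<in> A' i) \<and> X (real m * h) \<omega> = w}"
      unfolding pX_def C'_def A'_def mh using cyl_set[OF J(2) cov, of "\<lambda>t. X t _" A] by simp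
    moreover have "{\<omega>\<in>space N. pY \<omega> \<in> C' \<and> Y s \<omega> = y}
        = {\<omega>\<in>space N. (\<forall>j\<le>m. Y (real j * h) \<omega> \<in> A' (m - j)) \<and> Y (real m * h) \<omega> = y}"
    proof -
      have "pY \<omega> \<in> C' \<longleftrightarrow> (\<forall>i\<le>m. Y (s - real i * h) \<omega> \<in> A' i)" for \<omega>
        unfolding pY_def C'_def A'_def using cyl_set[OF J(2) cov, of "\<lambda>t. Y (s - t) \<omega>" A] by simp
      also have "\<dots> \<omega> \<longleftrightarrow> (\<forall>j\<le>m. Y (real j * h) \<omega> \<in> A' (m - j))" for \<omega>
      proof
        assume a: "\<forall>i\<le>m. Y (s - real i * h) \<omega> \<in> A' i"
        show "\<forall>j\<le>m. Y (real j * h) \<omega> \<in> A' (m - j)"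
        proof (intro allI impI)
          fix j assume j: "j \<le> m"
          have "s - real (m - j) * h = real j * h" using j mh by (simp add: of_nat_diff algebra_simps)
          then show "Y (real j * h) \<omega> \<in> A' (m - j)" using a[rule_format, of "m - j"] by simp
        qed
      next
        assume a: "\<forall>j\<le>m. Y (real j * h) \<omega> \<in> A' (m - j)"
        show "\<forall>i\<le>m. Y (s - real i * h) \<omega> \<in> A' i"
        proof (intro allI impI)
          fix i assume i: "i \<le> m"
          have "s - real i * h = real (m - i) * h" using i mh by (simp add: of_nat_diff algebra_simps)
          moreover have "m - (m - i) = i" using i by simp
          ultimately show "Y (s - real i * h) \<omega> \<in> A' i" using a[rule_format, of "m - i"] by simp
        qed
      qed
      finally show ?thesis unfolding mh by blast
    qed
    ultimately have "\<pi> y * measure M {\<omega>\<in>space M. pX \<omega> \<in> C' \<and> X s \<omega> = w}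
        = \<pi> w * measure N {\<omega>\<in>space N. pY \<omega> \<in> C' \<and> Y s \<omega> = y}"
      using grid_rev[OF pos cX cY hnn, of m A'] by simp
    then show "emeasure P1 (prod_emb (Dg s) (\<lambda>_. count_space UNIV) J (PiE J A))
             = emeasure P2 (prod_emb (Dg s) (\<lambda>_. count_space UNIV) J (PiE J A))"
      using e1[OF C's] e2[OF C's] unfolding C'_def by simp
  qed
  then have "emeasure P1 C = emeasure P2 C" by simp
  then have "ennreal (\<pi> y * measure M {\<omega>\<in>space M. pX \<omega> \<in> C \<and> X s \<omega> = w})
           = ennreal (\<pi> w * measure N {\<omega>\<in>space N. pY \<omega> \<in> C \<and> Y s \<omega> = y})"
    using e1 e2 C unfolding PD_def by simp
  moreover have "0 \<le> \<pi> y * measure M {\<omega>\<in>space M. pX \<omega> \<in> C \<and> X s \<omega> = w}"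
    using pos[of y] by simp
  moreover have "0 \<le> \<pi> w * measure N {\<omega>\<in>space N. pY \<omega> \<in> C \<and> Y s \<omega> = y}"
    using pos[of w] by simp
  ultimately show ?thesis unfolding pX_def pY_def by simp
qed

lemma pX_meas:
  assumes cX: "ctmc Q y M X" and s: "s \<ge> 0"
  shows "(\<lambda>\<omega>. \<lambda>t\<in>Dg s. X t \<omega>) \<in> M \<rightarrow>\<^sub>M PiM (Dg s) (\<lambda>_. count_space UNIV)"
proof (rule measurable_restrict)
  fix t assume "t \<in> Dg s"
  then have "t \<ge> 0" using Dg_bounds[OF s] by auto
  then show "X t \<in> M \<rightarrow>\<^sub>M count_space UNIV" using cX by (simp add: ctmc_def)
qed

lemma pY_meas:
  assumes cY: "ctmc Q y N Y" and s: "s \<ge> 0"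
  shows "(\<lambda>\<omega>. \<lambda>t\<in>Dg s. Y (s - t) \<omega>) \<in> N \<rightarrow>\<^sub>M PiM (Dg s) (\<lambda>_. count_space UNIV)"
proof (rule measurable_restrict)
  fix t assume "t \<in> Dg s"
  then have "s - t \<ge> 0" using Dg_bounds[OF s] by auto
  then show "Y (s - t) \<in> N \<rightarrow>\<^sub>M count_space UNIV" using cY by (simp add: ctmc_def)
qed

lemma ev_sets:
  assumes c: "ctmc Q y M X" and s: "s \<ge> 0" and p: "p \<in> M \<rightarrow>\<^sub>M P" and C: "C \<in> sets P"
  shows "{\<omega>\<in>space M. p \<omega> \<in> C \<and> X s \<omega> = w} \<in> sets M"
proof -
  have mX: "X s \<in> M \<rightarrow>\<^sub>M count_space UNIV" using c s by (simp add: ctmc_def)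
  have "{\<omega>\<in>space M. p \<omega> \<in> C \<and> X s \<omega> = w} = (p -` C \<inter> space M) \<inter> {\<omega>\<in>space M. X s \<omega> = w}" by blast
  also have "\<dots> \<in> sets M"
    by (intro sets.Int measurable_sets[OF p C]) (rule measurable_sets_Collect[OF mX], simp)
  finally show ?thesis .
qed

theorem lemmaA1:
  fixes Q :: "'s::finite \<Rightarrow> 's \<Rightarrow> real" and \<pi> :: "'s \<Rightarrow> real"
  assumes "generator Q" and "irreducible_gen Q" and "stationary Q \<pi>"
  shows "\<exists>c. \<forall>s\<ge>0. \<forall>B \<in> sets (PiM UNIV (\<lambda>_::'s. borel)). \<forall>y.
           \<forall>(M::'w measure) X. ctmc Q y M X \<longrightarrow>
           (\<forall>(N::'s \<Rightarrow> 'v measure) Y. (\<forall>z. ctmc (reversed_gen Q \<pi>) z (N z) (Y z)) \<longrightarrow>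
              measure M {\<omega>\<in>space M. occ s X \<omega> \<in> B}
                \<le> c * (MAX z. measure (N z) {\<omega>\<in>space (N z). occ s (Y z) \<omega> \<in> B}))"
proof -
  have pos: "\<And>x. \<pi> x > 0" using pi_pos[OF assms] .
  have sum1: "(\<Sum>x\<in>UNIV. \<pi> x) = 1" using assms(3) by (simp add: stationary_def)
  define c where "c = (\<Sum>y\<in>UNIV. 1 / \<pi> y)"
  show ?thesis
  proof (intro exI[of _ c] allI impI ballI)
    fix s :: real and B :: "('s \<Rightarrow> real) set" and y and M :: "'w measure" and X and N :: "'s \<Rightarrow> 'v measure" and Y
    assume s: "s \<ge> 0" and B: "B \<in> sets (PiM UNIV (\<lambda>_::'s. borel))" and cX: "ctmc Q y M X"
      and cY: "\<forall>z. ctmc (reversed_gen Q \<pi>) z (N z) (Y z)"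
    define PD where "PD = PiM (Dg s) (\<lambda>_. count_space (UNIV::'s set))"
    define C where "C = Fo s -` B \<inter> space PD"
    have Cs: "C \<in> sets PD" unfolding C_def PD_def by (rule measurable_sets[OF Fo_meas[OF s] B])
    interpret M: prob_space M using cX by (simp add: ctmc_def)
    have pXm: "(\<lambda>\<omega>. \<lambda>t\<in>Dg s. X t \<omega>) \<in> M \<rightarrow>\<^sub>M PD" unfolding PD_def by (rule pX_meas[OF cX s])
    have pYm: "(\<lambda>\<omega>. \<lambda>t\<in>Dg s. Y z (s - t) \<omega>) \<in> N z \<rightarrow>\<^sub>M PD" for z
      unfolding PD_def using cY by (intro pY_meas[OF _ s]) blast
    have inPD: "(\<lambda>t\<in>Dg s. g t) \<in> space PD" for g :: "real \<Rightarrow> 's"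
      unfolding PD_def by (simp add: space_PiM)
    have occX: "occ s X \<omega> \<in> B \<longleftrightarrow> (\<lambda>t\<in>Dg s. X t \<omega>) \<in> C" if "\<omega> \<in> space M" for \<omega>
    proof -
      have rp: "regular_path (\<lambda>t. X t \<omega>)" using cX that by (simp add: ctmc_def)
      have "occ s X \<omega> = Fo s (\<lambda>t\<in>Dg s. X t \<omega>)"
        using Fo_X[OF rp s] by (simp add: occ_def fun_eq_iff)
      then show ?thesis unfolding C_def using inPD by simp
    qed
    have occY: "occ s (Y z) \<omega> \<in> B \<longleftrightarrow> (\<lambda>t\<in>Dg s. Y z (s - t) \<omega>) \<in> C" if "\<omega> \<in> space (N z)" for z \<omega>
    proof -
      have rp: "regular_path (\<lambda>t. Y z t \<omega>)" using cY that by (simp add: ctmc_def)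
      have "occ s (Y z) \<omega> = Fo s (\<lambda>t\<in>Dg s. Y z (s - t) \<omega>)"
        using Fo_Y[OF rp s] by (simp add: occ_def fun_eq_iff)
      then show ?thesis unfolding C_def using inPD by simp
    qed
    define f where "f z = measure (N z) {\<omega>\<in>space (N z). occ s (Y z) \<omega> \<in> B}" for z
    define Mx where "Mx = (MAX z. f z)"
    have fle: "f z \<le> Mx" for z unfolding Mx_def by (rule Max_ge) auto
    have f0: "0 \<le> f z" for z unfolding f_def by simp
    have setsY: "{\<omega>\<in>space (N z). occ s (Y z) \<omega> \<in> B} = (\<lambda>\<omega>. \<lambda>t\<in>Dg s. Y z (s - t) \<omega>) -` C \<inter> space (N z)" for z
      using occY by blast
    have key: "\<pi> y * measure M {\<omega>\<in>space M. occ s X \<omega> \<in> B \<and> X s \<omega> = w} \<le> \<pi> w * Mx" for w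
    proof -
      interpret Nw: prob_space "N w" using cY by (simp add: ctmc_def)
      have cYw: "ctmc (reversed_gen Q \<pi>) w (N w) (Y w)" using cY by blast
      have "{\<omega>\<in>space M. occ s X \<omega> \<in> B \<and> X s \<omega> = w} = {\<omega>\<in>space M. (\<lambda>t\<in>Dg s. X t \<omega>) \<in> C \<and> X s \<omega> = w}"
        using occX by blast
      moreover have "{\<omega>\<in>space (N w). occ s (Y w) \<omega> \<in> B \<and> Y w s \<omega> = y}
          = {\<omega>\<in>space (N w). (\<lambda>t\<in>Dg s. Y w (s - t) \<omega>) \<in> C \<and> Y w s \<omega> = y}"
        using occY by blast
      moreover have "\<pi> y * measure M {\<omega>\<in>space M. (\<lambda>t\<in>Dg s. X t \<omega>) \<in> C \<and> X s \<omega> = w}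
          = \<pi> w * measure (N w) {\<omega>\<in>space (N w). (\<lambda>t\<in>Dg s. Y w (s - t) \<omega>) \<in> C \<and> Y w s \<omega> = y}"
        using path_eq[OF pos cX cYw s Cs[unfolded PD_def]] .
      moreover have "measure (N w) {\<omega>\<in>space (N w). occ s (Y w) \<omega> \<in> B \<and> Y w s \<omega> = y} \<le> f w"
        unfolding f_def
      proof (rule Nw.finite_measure_mono)
        show "{\<omega>\<in>space (N w). occ s (Y w) \<omega> \<in> B} \<in> sets (N w)"
          unfolding setsY by (rule measurable_sets[OF pYm Cs])
      qed blast
      ultimately have "\<pi> y * measure M {\<omega>\<in>space M. occ s X \<omega> \<in> B \<and> X s \<omega> = w} \<le> \<pi> w * f w"
        using pos[of w] by (simp add: mult_left_mono)
      also have "\<dots> \<le> \<pi> w * Mx" using pos[of w] fle[of w] by (simp add: mult_left_mono)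
      finally show ?thesis .
    qed
    have decomp: "measure M {\<omega>\<in>space M. occ s X \<omega> \<in> B}
        = (\<Sum>w\<in>UNIV. measure M {\<omega>\<in>space M. occ s X \<omega> \<in> B \<and> X s \<omega> = w})"
    proof -
      have "{\<omega>\<in>space M. occ s X \<omega> \<in> B} = (\<Union>w\<in>UNIV. {\<omega>\<in>space M. occ s X \<omega> \<in> B \<and> X s \<omega> = w})"
        by blast
      moreover have "{\<omega>\<in>space M. occ s X \<omega> \<in> B \<and> X s \<omega> = w} \<in> sets M" for w
      proof -
        have "{\<omega>\<in>space M. occ s X \<omega> \<in> B \<and> X s \<omega> = w} = {\<omega>\<in>space M. (\<lambda>t\<in>Dg s. X t \<omega>) \<in> C \<and> X s \<omega> = w}"
          using occX by blast
        then show ?thesis using ev_sets[OF cX s pXm Cs] by simp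
      qed
      moreover have "disjoint_family_on (\<lambda>w. {\<omega>\<in>space M. occ s X \<omega> \<in> B \<and> X s \<omega> = w}) UNIV"
        unfolding disjoint_family_on_def by blast
      ultimately show ?thesis
        using M.finite_measure_finite_Union[of UNIV "\<lambda>w. {\<omega>\<in>space M. occ s X \<omega> \<in> B \<and> X s \<omega> = w}"]
        by auto
    qed
    have "\<pi> y * measure M {\<omega>\<in>space M. occ s X \<omega> \<in> B} \<le> (\<Sum>w\<in>UNIV. \<pi> w * Mx)"
      unfolding decomp sum_distrib_left by (intro sum_mono key)
    also have "\<dots> = Mx" by (simp add: sum_distrib_right[symmetric] sum1)
    finally have "\<pi> y * measure M {\<omega>\<in>space M. occ s X \<omega> \<in> B} \<le> Mx" .
    then have le1: "measure M {\<omega>\<in>space M. occ s X \<omega> \<in> B} \<le> (1 / \<pi> y) * Mx"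
      using pos[of y] by (simp add: field_simps mult.commute)
    have Mx0: "0 \<le> Mx" using fle[of y] f0[of y] by simp
    have "1 / \<pi> y \<le> c" unfolding c_def
      by (rule member_le_sum) (use pos in \<open>auto intro: less_imp_le\<close>)
    then have "(1 / \<pi> y) * Mx \<le> c * Mx" using Mx0 by (rule mult_right_mono)
    with le1 show "measure M {\<omega>\<in>space M. occ s X \<omega> \<in> B} \<le> c * (MAX z. measure (N z) {\<omega>\<in>space (N z). occ s (Y z) \<omega> \<in> B})"
      unfolding Mx_def f_def by simp
  qed
qed

end
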